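(* Let $k<\omega$, $\bar S=\langle S_m:m\le k\rangle$ and $\Lambda\subseteq\prod_{m\le k}{}^\omega(S_m)$. Assume there is a family $\langle\alpha_{\bar\eta,m,n}:\bar\eta\in\Lambda,m\le k,n<\omega\rangle$ of ordinals below $2^{\aleph_0}$ such that for every function $h:\Lambda_{\le k}\to 2^{\aleph_0}$ there is $\bar\eta\in\Lambda$ with $h(\bar\eta\upharpoonleft\langle m,n\rangle)=\alpha_{\bar\eta,m,n}$ for all $m\le k$, $n<\omega$. Then there is $\mathbf a:\Lambda\times\omega\to\mathbb Z$ such that, writing $G=G_{(k,\bar S,\Lambda,\mathbf a)}$, every homomorphism $h:G\to\mathbb Z$ satisfies $h(z)=0$.
   Context: For a set $X$, ${}^\omega X$ is the set of functions $\omega\to X$; $\Lambda$ consists of sequences $\bar\eta=\langle\eta_0,\dots,\eta_k\rangle$ with $\eta_m\in{}^\omega(S_m)$. For $\bar\eta\in\Lambda$, $m\le k$, $n<\omega$, $\bar\eta\upharpoonleft\langle m,n\rangle$ is the sequence obtained from $\bar\eta$ by replacing $\eta_m$ with $\eta_m\restriction n$. $\Lambda_m=\{\bar\eta\upharpoonleft\langle m,n\rangle:\bar\eta\in\Lambda,n<\omega\}$, $\Lambda_{\le k}=\bigcup_{m\le k}\Lambda_m$. Given $\mathbf a:\Lambda\times\omega\to\mathbb Z$ (write $\mathbf a_{\bar\eta,n}$), $G_{(k,\bar S,\Lambda,\mathbf a)}$ is the abelian group generated by $z$, $x_{\bar\nu}$ ($\bar\nu\in\Lambda_{\le k}$) and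 $y_{\bar\eta,n}$ ($\bar\eta\in\Lambda,n<\omega$) freely except for the relations $(n!)y_{\bar\eta,n+1}=y_{\bar\eta,n}+\mathbf a_{\bar\eta,n}z+\sum_{m\le k}x_{\bar\eta\upharpoonleft\langle m,n\rangle}$ ($\bar\eta\in\Lambda$, $n<\omega$). *)

theory Defs
  imports "HOL-Algebra.Algebra" "HOL-Algebra.Free_Abelian_Groups"
begin

definition seq_prod :: "nat \<Rightarrow> (nat \<Rightarrow> 'a set) \<Rightarrow> (nat \<Rightarrow> 'a) list set" where
  "seq_prod k S = {\<eta>. length \<eta> = Suc k \<and> (\<forall>m\<le>k. \<forall>i. (\<eta> ! m) i \<in> S m)}"

text \<open>It is represented as the triple (m, n, modified list), the first two components
  recording which entry is the finite sequence and its length.\<close>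

definition restr :: "(nat \<Rightarrow> 'a) list \<Rightarrow> nat \<Rightarrow> nat \<Rightarrow> nat \<times> nat \<times> (nat \<Rightarrow> 'a) list" where
  "restr \<eta> m n = (m, n, \<eta>[m := (\<lambda>i. if i < n then (\<eta> ! m) i else undefined)])"

definition Lambda_le :: "nat \<Rightarrow> (nat \<Rightarrow> 'a) list set \<Rightarrow> (nat \<times> nat \<times> (nat \<Rightarrow> 'a) list) set" where
  "Lambda_le k \<Lambda> = {restr \<eta> m n | \<eta> m n. \<eta> \<in> \<Lambda> \<and> m \<le> k}"

datatype 'a gen = GZ | GX "nat \<times> nat \<times> (nat \<Rightarrow> 'a) list" | GY "(nat \<Rightarrow> 'a) list" nat

definition gens :: "nat \<Rightarrow> (nat \<Rightarrow> 'a) list set \<Rightarrow> 'a gen set" where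
  "gens k \<Lambda> = {GZ} \<union> GX ` Lambda_le k \<Lambda> \<union> {GY \<eta> n | \<eta> n. \<eta> \<in> \<Lambda>}"

definition free_G :: "nat \<Rightarrow> (nat \<Rightarrow> 'a) list set \<Rightarrow> ('a gen \<Rightarrow>\<^sub>0 int) monoid" where
  "free_G k \<Lambda> = free_Abelian_group (gens k \<Lambda>)"

definition relator :: "nat \<Rightarrow> ((nat \<Rightarrow> 'a) list \<Rightarrow> nat \<Rightarrow> int) \<Rightarrow> (nat \<Rightarrow> 'a) list \<Rightarrow> nat \<Rightarrow> 'a gen \<Rightarrow>\<^sub>0 int" where
  "relator k a \<eta> n =
     frag_cmul (int (fact n)) (frag_of (GY \<eta> (Suc n))) - frag_of (GY \<eta> n)
     - frag_cmul (a \<eta> n) (frag_of GZ) - (\<Sum>m\<le>k. frag_of (GX (restr \<eta> m n)))"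

definition rel_subgroup :: "nat \<Rightarrow> (nat \<Rightarrow> 'a) list set \<Rightarrow> ((nat \<Rightarrow> 'a) list \<Rightarrow> nat \<Rightarrow> int) \<Rightarrow> ('a gen \<Rightarrow>\<^sub>0 int) set" where
  "rel_subgroup k \<Lambda> a = generate (free_G k \<Lambda>) {relator k a \<eta> n | \<eta> n. \<eta> \<in> \<Lambda>}"

text \<open>The group \<open>G_{(k,S,\<Lambda>,a)}\<close> as a quotient of the free abelian group
  (S only enters through the requirement that \<open>\<Lambda>\<close> lies in the product).\<close>
definition G_grp :: "nat \<Rightarrow> (nat \<Rightarrow> 'a) list set \<Rightarrow> ((nat \<Rightarrow> 'a) list \<Rightarrow> nat \<Rightarrow> int)
    \<Rightarrow> ('a gen \<Rightarrow>\<^sub>0 int) set monoid" where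
  "G_grp k \<Lambda> a = free_G k \<Lambda> Mod rel_subgroup k \<Lambda> a"

definition G_z :: "nat \<Rightarrow> (nat \<Rightarrow> 'a) list set \<Rightarrow> ((nat \<Rightarrow> 'a) list \<Rightarrow> nat \<Rightarrow> int) \<Rightarrow> ('a gen \<Rightarrow>\<^sub>0 int) set" where
  "G_z k \<Lambda> a = rel_subgroup k \<Lambda> a #>\<^bsub>free_G k \<Lambda>\<^esub> frag_of GZ"

end

theory Submission
  imports Defs "HOL-Library.Countable"
begin

lemma no_sol:
  fixes y d :: "nat \<Rightarrow> int" and T :: int
  assumes T: "T > 0" and d: "\<And>n. 1 \<le> d n \<and> d n \<le> T"
    and rel: "\<And>n. (fact n :: int) * y (Suc n) = y n + d n"
  shows False
proof -
  define M where "M = max \<bar>y 2\<bar> T"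
  have MT: "T \<le> M" unfolding M_def by simp
  have bnd: "\<bar>y n\<bar> \<le> M" if "n \<ge> 2" for n
    using that
  proof (induction n rule: dec_induct)
    case base
    then show ?case unfolding M_def by simp
  next
    case (step n)
    have f2: "(fact n :: int) \<ge> 2"
    proof -
      have "(fact 2 :: int) \<le> fact n" using step(1) by (rule fact_mono)
      then show ?thesis by simp
    qed
    have "\<bar>(fact n :: int) * y (Suc n)\<bar> \<le> M + T"
      using rel[of n] d[of n] step(3) by (simp add: abs_le_iff)
    moreover have "\<bar>(fact n :: int) * y (Suc n)\<bar> = fact n * \<bar>y (Suc n)\<bar>"
      by (simp add: abs_mult)
    moreover have "fact n * \<bar>y (Suc n)\<bar> \<ge> 2 * \<bar>y (Suc n)\<bar>"
      using f2 by (simp add: mult_right_mono)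
    ultimately show ?case using MT by linarith
  qed
  define n where "n = nat (M + T) + 2"
  have n2: "n \<ge> 2" unfolding n_def by simp
  have fn: "(fact n :: int) > M + T"
  proof -
    have "int n \<le> fact n" using fact_ge_self[of n] by (metis of_nat_fact of_nat_le_iff)
    then show ?thesis unfolding n_def using MT T by linarith
  qed
  have y0: "y (Suc n) = 0"
  proof (rule ccontr)
    assume "y (Suc n) \<noteq> 0"
    then have "\<bar>y (Suc n)\<bar> \<ge> 1" by simp
    then have "fact n * \<bar>y (Suc n)\<bar> \<ge> (fact n :: int)"
      by (metis mult.right_neutral mult_left_mono of_nat_0_le_iff of_nat_fact fact_ge_zero)
    moreover have "\<bar>(fact n :: int) * y (Suc n)\<bar> \<le> M + T"
      using rel[of n] d[of n] bnd[OF n2] by (simp add: abs_le_iff)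
    moreover have "\<bar>(fact n :: int) * y (Suc n)\<bar> = fact n * \<bar>y (Suc n)\<bar>"
      by (simp add: abs_mult)
    ultimately show False using fn by linarith
  qed
  have e: "(fact (Suc n) :: int) * y (Suc (Suc n)) = d (Suc n)"
    using rel[of "Suc n"] y0 by simp
  have fs: "(fact (Suc n) :: int) > T"
  proof -
    have "(fact n :: int) \<le> fact (Suc n)" by (rule fact_mono) simp
    then show ?thesis using fn MT T by linarith
  qed
  show False
  proof (cases "y (Suc (Suc n)) = 0")
    case True then show ?thesis using e d[of "Suc n"] by simp
  next
    case False
    then have "\<bar>y (Suc (Suc n))\<bar> \<ge> 1" by simp
    then have "fact (Suc n) * \<bar>y (Suc (Suc n))\<bar> \<ge> (fact (Suc n) :: int)"
      by (metis mult.right_neutral mult_left_mono of_nat_0_le_iff of_nat_fact fact_ge_zero)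
    moreover have "\<bar>(fact (Suc n) :: int) * y (Suc (Suc n))\<bar> = fact (Suc n) * \<bar>y (Suc (Suc n))\<bar>"
      by (simp add: abs_mult)
    moreover have "\<bar>(fact (Suc n) :: int) * y (Suc (Suc n))\<bar> \<le> T"
      using e d[of "Suc n"] by simp
    ultimately show False using fs by linarith
  qed
qed

lemma lin:
  assumes f: "f \<in> hom (free_Abelian_group S) integer_group"
  shows lin_add: "Poly_Mapping.keys x \<subseteq> S \<Longrightarrow> Poly_Mapping.keys y \<subseteq> S \<Longrightarrow> f (x + y) = f x + f y"
    and lin_minus: "Poly_Mapping.keys x \<subseteq> S \<Longrightarrow> f (- x) = - f x"
    and lin_cmul: "Poly_Mapping.keys x \<subseteq> S \<Longrightarrow> f (frag_cmul c x) = c * f x"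
proof -
  have gh: "group_hom (free_Abelian_group S) integer_group f"
    using f by (simp add: group_hom_def group_hom_axioms_def)
  show "Poly_Mapping.keys x \<subseteq> S \<Longrightarrow> Poly_Mapping.keys y \<subseteq> S \<Longrightarrow> f (x + y) = f x + f y"
    using f hom_mult[OF f, of x y] by simp
  show "Poly_Mapping.keys x \<subseteq> S \<Longrightarrow> f (- x) = - f x"
    using group_hom.hom_inv[OF gh, of x] by simp
  show "Poly_Mapping.keys x \<subseteq> S \<Longrightarrow> f (frag_cmul c x) = c * f x"
    using group_hom.hom_int_pow[OF gh, of x c] by simp
qed

lemma lin_diff:
  assumes f: "f \<in> hom (free_Abelian_group S) integer_group"
    and "Poly_Mapping.keys x \<subseteq> S" "Poly_Mapping.keys y \<subseteq> S"
  shows "f (x - y) = f x - f y"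
proof -
  have "x - y = x + (- y)" by simp
  then show ?thesis using lin_add[OF f, of x "-y"] lin_minus[OF f, of y] assms
    by (simp add: keys_minus)
qed

lemma lin_sum:
  assumes f: "f \<in> hom (free_Abelian_group S) integer_group"
    and "finite I" "\<And>i. i \<in> I \<Longrightarrow> Poly_Mapping.keys (g i) \<subseteq> S"
  shows "f (sum g I) = (\<Sum>i\<in>I. f (g i))"
  using assms(2,3)
proof (induction I rule: finite_induct)
  case empty
  have "f 0 = 0" using hom_one[OF f] by simp
  then show ?case by simp
next
  case (insert i I)
  have "Poly_Mapping.keys (sum g I) \<subseteq> S"
    using sum_closed_free_Abelian_group[of I g S] insert by simp
  then show ?case using insert lin_add[OF f, of "g i" "sum g I"] by simp
qed


lemma mod_choice:
  fixes c t :: int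
  assumes "t \<noteq> 0"
  defines "dv \<equiv> (if c mod \<bar>t\<bar> = 0 then \<bar>t\<bar> else c mod \<bar>t\<bar>)"
  shows "1 \<le> dv" "dv \<le> \<bar>t\<bar>" "(dv - c) div t * t = dv - c"
proof -
  have T: "\<bar>t\<bar> > 0" using assms by simp
  have r: "0 \<le> c mod \<bar>t\<bar>" "c mod \<bar>t\<bar> < \<bar>t\<bar>" using T by auto
  show "1 \<le> dv" "dv \<le> \<bar>t\<bar>" unfolding dv_def using r by auto
  have "\<bar>t\<bar> dvd (dv - c)"
  proof (cases "c mod \<bar>t\<bar> = 0")
    case True
    then have "\<bar>t\<bar> dvd c" by (simp add: dvd_eq_mod_eq_0)
    then show ?thesis unfolding dv_def using True by simp
  next
    case False
    have e: "c mod \<bar>t\<bar> - c = \<bar>t\<bar> * (- (c div \<bar>t\<bar>))"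
      using div_mult_mod_eq[of c "\<bar>t\<bar>"] by (simp add: algebra_simps)
    have "\<bar>t\<bar> dvd (c mod \<bar>t\<bar> - c)" unfolding e by (rule dvd_triv_left)
    then show ?thesis unfolding dv_def using False by simp
  qed
  then have "t dvd (dv - c)" by simp
  then show "(dv - c) div t * t = dv - c" by simp
qed

lemma in_gens_Y: "\<eta> \<in> \<Lambda> \<Longrightarrow> GY \<eta> n \<in> gens k \<Lambda>" unfolding gens_def by simp
lemma in_gens_Z: "GZ \<in> gens k \<Lambda>" unfolding gens_def by simp
lemma in_Lambda_le: "\<eta> \<in> \<Lambda> \<Longrightarrow> m \<le> k \<Longrightarrow> restr \<eta> m n \<in> Lambda_le k \<Lambda>" unfolding Lambda_le_def
  by (rule CollectI, rule exI[of _ \<eta>], rule exI[of _ m], rule exI[of _ n]) simp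
lemma in_gens_X: "\<nu> \<in> Lambda_le k \<Lambda> \<Longrightarrow> GX \<nu> \<in> gens k \<Lambda>" unfolding gens_def by simp

lemma keys_sub_diff:
  assumes "Poly_Mapping.keys x \<subseteq> G" "Poly_Mapping.keys y \<subseteq> G"
  shows "Poly_Mapping.keys (x - y) \<subseteq> G"
  using order_trans[OF keys_diff[of x y] Un_least[OF assms]] .
lemma keys_sub_cmul:
  assumes "Poly_Mapping.keys x \<subseteq> G"
  shows "Poly_Mapping.keys (frag_cmul c x) \<subseteq> G"
  using order_trans[OF keys_cmul[of c x] assms] .
lemma relator_keys:
  fixes \<eta> :: "(nat \<Rightarrow> 'a) list" and a :: "(nat \<Rightarrow> 'a) list \<Rightarrow> nat \<Rightarrow> int"
  assumes X: "\<And>m. m \<le> k \<Longrightarrow> GX (restr \<eta> m n) \<in> G"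
    and Y: "\<And>n. GY \<eta> n \<in> G" and Z: "GZ \<in> G"
  shows "Poly_Mapping.keys (\<Sum>m\<le>k. frag_of (GX (restr \<eta> m n))) \<subseteq> G"
      "Poly_Mapping.keys (frag_cmul (int (fact n)) (frag_of (GY \<eta> (Suc n)))) \<subseteq> G"
      "Poly_Mapping.keys (frag_of (GY \<eta> n)) \<subseteq> G"
      "Poly_Mapping.keys (frag_cmul (a \<eta> n) (frag_of GZ)) \<subseteq> G"
      "Poly_Mapping.keys (frag_cmul (int (fact n)) (frag_of (GY \<eta> (Suc n))) - frag_of (GY \<eta> n)) \<subseteq> G"
      "Poly_Mapping.keys (frag_cmul (int (fact n)) (frag_of (GY \<eta> (Suc n))) - frag_of (GY \<eta> n) - frag_cmul (a \<eta> n) (frag_of GZ)) \<subseteq> G"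
      "Poly_Mapping.keys (relator k a \<eta> n) \<subseteq> G"
proof -
  show ks: "Poly_Mapping.keys (\<Sum>m\<le>k. frag_of (GX (restr \<eta> m n))) \<subseteq> G"
    using sum_closed_free_Abelian_group[of "{..k}" "\<lambda>m. frag_of (GX (restr \<eta> m n))" G] X by simp
  show k1: "Poly_Mapping.keys (frag_cmul (int (fact n)) (frag_of (GY \<eta> (Suc n)))) \<subseteq> G"
    by (rule keys_sub_cmul) (simp add: Y)
  show k2: "Poly_Mapping.keys (frag_of (GY \<eta> n)) \<subseteq> G" using Y by simp
  show k3: "Poly_Mapping.keys (frag_cmul (a \<eta> n) (frag_of GZ)) \<subseteq> G"
    by (rule keys_sub_cmul) (simp add: Z)
  show k12: "Poly_Mapping.keys (frag_cmul (int (fact n)) (frag_of (GY \<eta> (Suc n))) - frag_of (GY \<eta> n)) \<subseteq> G"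
    using k1 k2 by (rule keys_sub_diff)
  show k123: "Poly_Mapping.keys (frag_cmul (int (fact n)) (frag_of (GY \<eta> (Suc n))) - frag_of (GY \<eta> n) - frag_cmul (a \<eta> n) (frag_of GZ)) \<subseteq> G"
    using k12 k3 by (rule keys_sub_diff)
  show "Poly_Mapping.keys (relator k a \<eta> n) \<subseteq> G"
    unfolding relator_def using k123 ks by (rule keys_sub_diff)
qed

theorem claim2p3:
  fixes k :: nat and S :: "nat \<Rightarrow> 'a set" and \<Lambda> :: "(nat \<Rightarrow> 'a) list set"
  assumes "\<Lambda> \<subseteq> seq_prod k S"
    and "\<exists>\<alpha> :: (nat \<Rightarrow> 'a) list \<Rightarrow> nat \<Rightarrow> nat \<Rightarrow> nat set.
           \<forall>h :: nat \<times> nat \<times> (nat \<Rightarrow> 'a) list \<Rightarrow> nat set.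
             \<exists>\<eta>\<in>\<Lambda>. \<forall>m\<le>k. \<forall>n. h (restr \<eta> m n) = \<alpha> \<eta> m n"
  shows "\<exists>a :: (nat \<Rightarrow> 'a) list \<Rightarrow> nat \<Rightarrow> int.
           \<forall>h \<in> hom (G_grp k \<Lambda> a) integer_group. h (G_z k \<Lambda> a) = 0"
proof -
  from assms(2) obtain \<alpha> :: "(nat \<Rightarrow> 'a) list \<Rightarrow> nat \<Rightarrow> nat \<Rightarrow> nat set" where
    \<alpha>0: "\<forall>h :: nat \<times> nat \<times> (nat \<Rightarrow> 'a) list \<Rightarrow> nat set.
             \<exists>\<eta>\<in>\<Lambda>. \<forall>m\<le>k. \<forall>n. h (restr \<eta> m n) = \<alpha> \<eta> m n"
    by (rule exE)
  note \<alpha> = spec[OF \<alpha>0]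
  define dec :: "nat set \<Rightarrow> int \<times> int" where "dec Q = from_nat (SOME v. v \<in> Q)" for Q
  define tt where "tt \<eta> = snd (dec (\<alpha> \<eta> 0 0))" for \<eta>
  define cc where "cc \<eta> n = (\<Sum>m\<le>k. fst (dec (\<alpha> \<eta> m n)))" for \<eta> n
  define dd where "dd \<eta> n = (if cc \<eta> n mod \<bar>tt \<eta>\<bar> = 0 then \<bar>tt \<eta>\<bar> else cc \<eta> n mod \<bar>tt \<eta>\<bar>)" for \<eta> n
  define a where "a \<eta> n = (if tt \<eta> = 0 then 0 else (dd \<eta> n - cc \<eta> n) div tt \<eta>)" for \<eta> n
  show ?thesis
  proof (rule exI[of _ a], intro ballI)
    fix h assume h: "h \<in> hom (G_grp k \<Lambda> a) integer_group"
    define F where "F = free_G k \<Lambda>"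
    define N where "N = rel_subgroup k \<Lambda> a"
    define R where "R = {relator k a \<eta> n | \<eta> n. \<eta> \<in> \<Lambda>}"
    have F_eq: "F = free_Abelian_group (gens k \<Lambda>)" unfolding F_def free_G_def by simp
    have gF: "group F" unfolding F_eq by simp
    have cF: "comm_group F" unfolding F_eq by (rule abelian_free_Abelian_group)
    have restr_in: "GX (restr \<eta> m n) \<in> gens k \<Lambda>" if "\<eta> \<in> \<Lambda>" "m \<le> k" for \<eta> m n
      using that by (intro in_gens_X in_Lambda_le)
    have Y_in: "GY \<eta> n \<in> gens k \<Lambda>" if "\<eta> \<in> \<Lambda>" for \<eta> n
      using that by (rule in_gens_Y)
    have Z_in: "GZ \<in> gens k \<Lambda>" by (rule in_gens_Z)
    have KS: "Poly_Mapping.keys (\<Sum>m\<le>k. frag_of (GX (restr \<eta> m n))) \<subseteq> gens k \<Lambda>"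
      "Poly_Mapping.keys (frag_cmul (int (fact n)) (frag_of (GY \<eta> (Suc n)))) \<subseteq> gens k \<Lambda>"
      "Poly_Mapping.keys (frag_of (GY \<eta> n)) \<subseteq> gens k \<Lambda>"
      "Poly_Mapping.keys (frag_cmul (a \<eta> n) (frag_of GZ)) \<subseteq> gens k \<Lambda>"
      "Poly_Mapping.keys (frag_cmul (int (fact n)) (frag_of (GY \<eta> (Suc n))) - frag_of (GY \<eta> n)) \<subseteq> gens k \<Lambda>"
      "Poly_Mapping.keys (frag_cmul (int (fact n)) (frag_of (GY \<eta> (Suc n))) - frag_of (GY \<eta> n) - frag_cmul (a \<eta> n) (frag_of GZ)) \<subseteq> gens k \<Lambda>"
      "Poly_Mapping.keys (relator k a \<eta> n) \<subseteq> gens k \<Lambda>"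
      if \<eta>: "\<eta> \<in> \<Lambda>" for \<eta> n
      using relator_keys[where k=k and \<eta>=\<eta> and n=n and G="gens k \<Lambda>", OF restr_in[OF \<eta>] Y_in[OF \<eta>] Z_in] by simp_all
    have RF: "R \<subseteq> carrier F"
    proof
      fix r assume "r \<in> R"
      then obtain \<eta> n where r: "r = relator k a \<eta> n" "\<eta> \<in> \<Lambda>" unfolding R_def by blast
      show "r \<in> carrier F" unfolding F_eq r(1) using KS(7)[OF r(2)] by simp
    qed
    have subN: "subgroup N F" unfolding N_def rel_subgroup_def F_def[symmetric] R_def[symmetric]
      using group.generate_is_subgroup[OF gF RF] .
    have nN: "N \<lhd> F" using comm_group.subgroup_imp_normal[OF cF subN] .
    have G: "G_grp k \<Lambda> a = F Mod N" unfolding G_grp_def F_def N_def ..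
    define f where "f = h \<circ> (\<lambda>x. N #>\<^bsub>F\<^esub> x)"
    have fh: "f \<in> hom F integer_group"
      unfolding f_def using hom_compose[OF normal.r_coset_hom_Mod[OF nN]] h G by simp
    have fh': "f \<in> hom (free_Abelian_group (gens k \<Lambda>)) integer_group" using fh F_eq by simp
    have fz: "h (G_z k \<Lambda> a) = f (frag_of GZ)"
      unfolding f_def G_z_def F_def N_def by simp
    have hN: "h N = 0"
    proof -
      have "h \<one>\<^bsub>F Mod N\<^esub> = \<one>\<^bsub>integer_group\<^esub>"
        using hom_one[of h "F Mod N" integer_group] h G normal.factorgroup_is_group[OF nN] by simp
      then show ?thesis by simp
    qed
    have fR: "f r = 0" if "r \<in> R" for r
    proof -
      have "r \<in> N" unfolding N_def rel_subgroup_def F_def[symmetric] R_def[symmetric]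
        using that by (rule generate.incl)
      then have "N #>\<^bsub>F\<^esub> r = N" using group.coset_join2[OF gF _ subN] RF that by blast
      then show ?thesis unfolding f_def using hN by simp
    qed
    define t where "t = f (frag_of GZ)"
    define H where "H \<nu> = {to_nat (f (frag_of (GX \<nu>)), t)}" for \<nu>
    obtain \<eta> where \<eta>: "\<eta> \<in> \<Lambda>" and hq: "\<And>m n. m \<le> k \<Longrightarrow> H (restr \<eta> m n) = \<alpha> \<eta> m n"
      using \<alpha>[of H] by (elim bexE) auto
    have decq: "dec (\<alpha> \<eta> m n) = (f (frag_of (GX (restr \<eta> m n))), t)" if "m \<le> k" for m n
      unfolding hq[OF that, symmetric] H_def dec_def by simp
    have ttq: "tt \<eta> = t" unfolding tt_def using decq[of 0 0] by simp
    define c where "c n = (\<Sum>m\<le>k. f (frag_of (GX (restr \<eta> m n))))" for n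
    have ccq: "cc \<eta> n = c n" for n unfolding cc_def c_def using decq by simp
    define y where "y n = f (frag_of (GY \<eta> n))" for n
    show "h (G_z k \<Lambda> a) = 0"
    proof (rule ccontr)
      assume "h (G_z k \<Lambda> a) \<noteq> 0"
      then have t0: "t \<noteq> 0" using fz t_def by simp
      define d where "d n = dd \<eta> n" for n
      have dq: "d n = (if c n mod \<bar>t\<bar> = 0 then \<bar>t\<bar> else c n mod \<bar>t\<bar>)" for n
        unfolding d_def dd_def ccq ttq ..
      have aq: "a \<eta> n * t = d n - c n" for n
        unfolding a_def ttq using t0 mod_choice(3)[OF t0, of "c n"] dq ccq d_def by simp
      have drange: "1 \<le> d n \<and> d n \<le> \<bar>t\<bar>" for n
        using mod_choice(1,2)[OF t0, of "c n"] dq by simp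
      have rel: "(fact n :: int) * y (Suc n) = y n + d n" for n
      proof -
        have rin: "relator k a \<eta> n \<in> R" unfolding R_def using \<eta> by blast
        note ks = KS(1)[OF \<eta>] and k1 = KS(2)[OF \<eta>] and k2 = KS(3)[OF \<eta>]
          and k3 = KS(4)[OF \<eta>] and k12 = KS(5)[OF \<eta>] and k123 = KS(6)[OF \<eta>]
        have "0 = f (relator k a \<eta> n)" using fR[OF rin] by simp
        also have "\<dots> = int (fact n) * y (Suc n) - y n - a \<eta> n * t - c n"
          unfolding relator_def
          apply (subst lin_diff[OF fh' k123 ks])
          apply (subst lin_diff[OF fh' k12 k3])
          apply (subst lin_diff[OF fh' k1 k2])
          apply (subst lin_sum[OF fh'])
          using restr_in[OF \<eta>] Y_in[OF \<eta>] Z_in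
          by (auto simp: lin_cmul[OF fh'] y_def t_def c_def)
        finally show ?thesis using aq[of n] by simp
      qed
      show False using no_sol[of "\<bar>t\<bar>" d y] t0 drange rel by simp
    qed
  qed
qed

end
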